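(* The map $\rho:HC_F(\mathbf v,d)\to Z(\mathbf v,d)$, $\rho([u,y_1,y_2,r_1,r_2])=[u,y_1,y_2]$, is surjective. Moreover, if $\mathbf v_1=(v_{11},v_{12})$, $\mathbf v_2=(v_{21},v_{22})$ are real vectors and $d\in\mathbb{R}$, then $\rho$ restricts to a surjective map $HC_F(\mathbf v,d)(\mathbb{R})\to Z(\mathbf v,d)(\mathbb{R})$.
   Context: Parameters $[\mathbf v,d]=[v_{11},v_{12},v_{21},v_{22},d]\in\mathbb{C}P^4$ (not all zero). On $\mathbb{C}P^4$ with coordinates $[u,y_1,y_2,r_1,r_2]$, let $L_1=v_{11}(u-y_1)-v_{12}y_2$, $L_2=-v_{21}(u+y_1)-v_{22}y_2$, $f_1=(u-y_1)^2+y_2^2$, $f_2=(u+y_1)^2+y_2^2$, and let $HC_F(\mathbf v,d)$ be the set of points with $f_1=r_1^2$, $f_2=r_2^2$ and $L_2r_1-L_1r_2-dr_1r_2=0$. Let $Z(\mathbf v,d)\subset\mathbb{C}P^2$ (coordinates $[u,y_1,y_2]$) be the zero set of $h=(L_2^2f_1+L_1^2f_2-d^2f_1f_2)^2-4L_1^2L_2^2f_1f_2$. For a variety defined by real polynomials, its set of real points $(\mathbb{R})$ consists of its points having a representative with all homogeneous coordinates real. *)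

theory Defs
  imports Complex_Main
begin

text \<open>Points of CP^n are represented by nonzero coordinate tuples (representatives);
two representatives give the same point iff they differ by a nonzero scalar.\<close>

type_synonym cp2 = "complex \<times> complex \<times> complex"
type_synonym cp4 = "complex \<times> complex \<times> complex \<times> complex \<times> complex"

definition proj_eq3 :: "cp2 \<Rightarrow> cp2 \<Rightarrow> bool" where
  "proj_eq3 p q \<longleftrightarrow> (\<exists>c::complex. c \<noteq> 0 \<and>
     fst p = c * fst q \<and> fst (snd p) = c * fst (snd q) \<and> snd (snd p) = c * snd (snd q))"

definition LL1 :: "complex \<Rightarrow> complex \<Rightarrow> complex \<Rightarrow> complex \<Rightarrow> complex \<Rightarrow> complex" where
  "LL1 v11 v12 u y1 y2 = v11 * (u - y1) - v12 * y2"

definition LL2 :: "complex \<Rightarrow> complex \<Rightarrow> complex \<Rightarrow> complex \<Rightarrow> complex \<Rightarrow> complex" where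
  "LL2 v21 v22 u y1 y2 = - v21 * (u + y1) - v22 * y2"

definition ff1 :: "complex \<Rightarrow> complex \<Rightarrow> complex \<Rightarrow> complex" where
  "ff1 u y1 y2 = (u - y1)^2 + y2^2"

definition ff2 :: "complex \<Rightarrow> complex \<Rightarrow> complex \<Rightarrow> complex" where
  "ff2 u y1 y2 = (u + y1)^2 + y2^2"

definition HC_F :: "complex \<Rightarrow> complex \<Rightarrow> complex \<Rightarrow> complex \<Rightarrow> complex \<Rightarrow> cp4 set" where
  "HC_F v11 v12 v21 v22 d = {(u, y1, y2, r1, r2).
      (u, y1, y2, r1, r2) \<noteq> (0, 0, 0, 0, 0) \<and>
      ff1 u y1 y2 = r1^2 \<and> ff2 u y1 y2 = r2^2 \<and>
      LL2 v21 v22 u y1 y2 * r1 - LL1 v11 v12 u y1 y2 * r2 - d * r1 * r2 = 0}"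

definition hpoly :: "complex \<Rightarrow> complex \<Rightarrow> complex \<Rightarrow> complex \<Rightarrow> complex \<Rightarrow>
                     complex \<Rightarrow> complex \<Rightarrow> complex \<Rightarrow> complex" where
  "hpoly v11 v12 v21 v22 d u y1 y2 =
     (let L1 = LL1 v11 v12 u y1 y2; L2 = LL2 v21 v22 u y1 y2;
          f1 = ff1 u y1 y2; f2 = ff2 u y1 y2
      in (L2^2 * f1 + L1^2 * f2 - d^2 * f1 * f2)^2 - 4 * L1^2 * L2^2 * f1 * f2)"

definition Zset :: "complex \<Rightarrow> complex \<Rightarrow> complex \<Rightarrow> complex \<Rightarrow> complex \<Rightarrow> cp2 set" where
  "Zset v11 v12 v21 v22 d = {(u, y1, y2).
      (u, y1, y2) \<noteq> (0, 0, 0) \<and> hpoly v11 v12 v21 v22 d u y1 y2 = 0}"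

definition rho :: "cp4 \<Rightarrow> cp2" where
  "rho q = (case q of (u, y1, y2, r1, r2) \<Rightarrow> (u, y1, y2))"

definition real3 :: "cp2 \<Rightarrow> bool" where
  "real3 p \<longleftrightarrow> (case p of (a, b, c) \<Rightarrow> a \<in> \<real> \<and> b \<in> \<real> \<and> c \<in> \<real>)"

definition real5 :: "cp4 \<Rightarrow> bool" where
  "real5 q \<longleftrightarrow> (case q of (a, b, c, e, g) \<Rightarrow>
      a \<in> \<real> \<and> b \<in> \<real> \<and> c \<in> \<real> \<and> e \<in> \<real> \<and> g \<in> \<real>)"

end

theory Submission
  imports Defs
begin

lemma fact_id:
  fixes L1 L2 d s1 s2 :: complex
  shows "(L2^2*s1^2 + L1^2*s2^2 - d^2*s1^2*s2^2)^2 - 4*L1^2*L2^2*s1^2*s2^2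
     = (L2*s1 - L1*s2 - d*s1*s2) * (-(L2*s1 - L1*s2 + d*s1*s2))
       * (-(L2*s1 + L1*s2 - d*s1*s2)) * (L2*s1 + L1*s2 + d*s1*s2)"
  by (simp add: algebra_simps power2_eq_square)

lemma key:
  fixes L1 L2 d s1 s2 f1 f2 :: complex
  assumes "s1^2 = f1" "s2^2 = f2"
    "(L2^2*f1 + L1^2*f2 - d^2*f1*f2)^2 - 4*L1^2*L2^2*f1*f2 = 0"
  shows "\<exists>r1 r2. r1^2 = f1 \<and> r2^2 = f2 \<and> L2*r1 - L1*r2 - d*r1*r2 = 0
      \<and> (r1 = s1 \<or> r1 = -s1) \<and> (r2 = s2 \<or> r2 = -s2)"
proof -
  have "(L2*s1 - L1*s2 - d*s1*s2) * (-(L2*s1 - L1*s2 + d*s1*s2))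
       * (-(L2*s1 + L1*s2 - d*s1*s2)) * (L2*s1 + L1*s2 + d*s1*s2) = 0"
    using assms fact_id[of L2 s1 L1 s2 d] by simp
  then consider "L2*s1 - L1*s2 - d*s1*s2 = 0" | "L2*s1 - L1*s2 + d*s1*s2 = 0"
     | "L2*s1 + L1*s2 - d*s1*s2 = 0" | "L2*s1 + L1*s2 + d*s1*s2 = 0"
    by (simp only: mult_eq_0_iff neg_equal_0_iff_equal) blast
  then show ?thesis
  proof cases
    case 1 then show ?thesis using assms by blast
  next
    case 2
    have "L2*(-s1) - L1*(-s2) - d*(-s1)*(-s2) = 0" using 2 by (simp add: algebra_simps)
    then show ?thesis using assms by (metis power2_minus)
  next
    case 3
    have "L2*(-s1) - L1*s2 - d*(-s1)*s2 = 0" using 3 by (simp add: algebra_simps)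
    then show ?thesis using assms by (metis power2_minus)
  next
    case 4
    have "L2*s1 - L1*(-s2) - d*s1*(-s2) = 0" using 4 by (simp add: algebra_simps)
    then show ?thesis using assms by (metis power2_minus)
  qed
qed

lemma part1:
  assumes "q \<in> HC_F v11 v12 v21 v22 d"
  shows "rho q \<in> Zset v11 v12 v21 v22 d"
proof -
  obtain u y1 y2 r1 r2 where q: "q = (u,y1,y2,r1,r2)" by (cases q) auto
  let ?L1 = "LL1 v11 v12 u y1 y2" and ?L2 = "LL2 v21 v22 u y1 y2"
  have h: "ff1 u y1 y2 = r1^2" "ff2 u y1 y2 = r2^2"
    "?L2 * r1 - ?L1 * r2 - d * r1 * r2 = 0" "(u, y1, y2, r1, r2) \<noteq> (0, 0, 0, 0, 0)"
    using assms q by (auto simp: HC_F_def)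
  have nz: "(u,y1,y2) \<noteq> (0,0,0)"
    using h by (auto simp: ff1_def ff2_def)
  have "hpoly v11 v12 v21 v22 d u y1 y2 = 0"
    unfolding hpoly_def Let_def h(1,2) fact_id using h(3) by simp
  then show ?thesis using nz q by (simp add: rho_def Zset_def)
qed

lemma part2:
  assumes "p \<in> Zset v11 v12 v21 v22 d" and "s1^2 = ff1 (fst p) (fst (snd p)) (snd (snd p))"
    "s2^2 = ff2 (fst p) (fst (snd p)) (snd (snd p))"
  shows "\<exists>q \<in> HC_F v11 v12 v21 v22 d. rho q = p \<and> (fst (snd (snd (snd q))) = s1 \<or> fst (snd (snd (snd q))) = -s1)
      \<and> (snd (snd (snd (snd q))) = s2 \<or> snd (snd (snd (snd q))) = -s2)"
proof -
  obtain u y1 y2 where p: "p = (u,y1,y2)" by (cases p) auto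
  have z: "(u,y1,y2) \<noteq> (0,0,0)" "hpoly v11 v12 v21 v22 d u y1 y2 = 0"
    using assms p by (auto simp: Zset_def)
  obtain r1 r2 where r: "r1^2 = ff1 u y1 y2" "r2^2 = ff2 u y1 y2"
    "LL2 v21 v22 u y1 y2 * r1 - LL1 v11 v12 u y1 y2 * r2 - d*r1*r2 = 0"
    "(r1 = s1 \<or> r1 = -s1)" "(r2 = s2 \<or> r2 = -s2)"
    using key[of s1 "ff1 u y1 y2" s2 "ff2 u y1 y2" "LL2 v21 v22 u y1 y2" "LL1 v11 v12 u y1 y2" d]
      assms z p by (auto simp: hpoly_def Let_def)
  show ?thesis
    apply (rule bexI[where x="(u,y1,y2,r1,r2)"])
    using r z p by (auto simp: HC_F_def rho_def)
qed

lemma proj_refl: "proj_eq3 p p"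
  unfolding proj_eq3_def by (rule exI[where x=1]) simp

theorem lemma8p1:
  fixes v11 v12 v21 v22 d :: complex
  assumes "(v11, v12, v21, v22, d) \<noteq> (0, 0, 0, 0, 0)"
  shows "(\<forall>q \<in> HC_F v11 v12 v21 v22 d. rho q \<in> Zset v11 v12 v21 v22 d)
       \<and> (\<forall>p \<in> Zset v11 v12 v21 v22 d.
            \<exists>q \<in> HC_F v11 v12 v21 v22 d. proj_eq3 (rho q) p)
       \<and> ((v11 \<in> \<real> \<and> v12 \<in> \<real> \<and> v21 \<in> \<real> \<and> v22 \<in> \<real> \<and> d \<in> \<real>) \<longrightarrow>
            (\<forall>p \<in> Zset v11 v12 v21 v22 d. real3 p \<longrightarrow>
               (\<exists>q \<in> HC_F v11 v12 v21 v22 d. real5 q \<and> proj_eq3 (rho q) p)))"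
proof (intro conjI ballI impI)
  fix q assume "q \<in> HC_F v11 v12 v21 v22 d" then show "rho q \<in> Zset v11 v12 v21 v22 d" by (rule part1)
next
  fix p assume "p \<in> Zset v11 v12 v21 v22 d"
  from part2[OF this power2_csqrt power2_csqrt]
  show "\<exists>q \<in> HC_F v11 v12 v21 v22 d. proj_eq3 (rho q) p" using proj_refl by metis
next
  fix p assume pz: "p \<in> Zset v11 v12 v21 v22 d" and rp: "real3 p"
  obtain u y1 y2 where p: "p = (u,y1,y2)" by (cases p) auto
  obtain a b c where abc: "u = of_real a" "y1 = of_real b" "y2 = of_real c"
    using rp p by (auto simp: real3_def elim!: Reals_cases)
  define s1 where "s1 = complex_of_real (sqrt ((a-b)^2 + c^2))"
  define s2 where "s2 = complex_of_real (sqrt ((a+b)^2 + c^2))"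
  have e1: "s1^2 = ff1 (fst p) (fst (snd p)) (snd (snd p))"
    unfolding s1_def p abc ff1_def by (simp flip: of_real_power of_real_add of_real_diff)
  have e2: "s2^2 = ff2 (fst p) (fst (snd p)) (snd (snd p))"
    unfolding s2_def p abc ff2_def by (simp flip: of_real_power of_real_add of_real_diff)
  obtain q where q: "q \<in> HC_F v11 v12 v21 v22 d" "rho q = p"
    "fst (snd (snd (snd q))) = s1 \<or> fst (snd (snd (snd q))) = -s1"
    "snd (snd (snd (snd q))) = s2 \<or> snd (snd (snd (snd q))) = -s2"
    using part2[OF pz e1 e2] by blast
  have "real5 q"
    using q rp unfolding s1_def s2_def
    by (cases q) (auto simp: real5_def real3_def rho_def)
  then show "\<exists>q \<in> HC_F v11 v12 v21 v22 d. real5 q \<and> proj_eq3 (rho q) p"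
    using q proj_refl by metis
qed

end
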